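(* Let $m\ge2$ be an integer and let $A$ be a left brace with $A^{(3)}=A^{m+1}=\{0\}$. Let $a\in A$, and define $a_1=a$ and $a_{j+1}=a*a_j$ for $j\ge1$ (so $a_j=0$ for $j>m$). Then for every integer $n$ (possibly negative or zero) and every $1\le j\le m$, \[(na)*a_j=\sum_{k=1}^{m-j}\binom{n}{k}a_{k+j}.\]
   Context: A left brace $(A,+,\cdot)$ is a set $A$ with two binary operations such that $(A,+)$ is an abelian group, $(A,\cdot)$ is a group, and $a(b+c)=ab-a+ac$ for all $a,b,c\in A$. In a left brace, $a*b=-a+ab-b$. For subsets $L,M\subseteq A$, $L*M$ is the subgroup of $(A,+)$ generated by $\{l*m\mid l\in L,m\in M\}$. Set $A^{(1)}=A$, $A^{(r+1)}=A^{(r)}*A$, and $A^1=A$, $A^{r+1}=A*A^r$ for $r\ge1$. Here $na$ is the $n$-fold multiple of $a$ in $(A,+)$. Generalised binomial coefficients: for $n\in\mathbb{Z}$ and integer $k\ge0$, $\binom{n}{0}=1$ and $\binom{n}{k}=\frac{n(n-1)\cdots(n-k+1)}{k!}$ for $k>0$. *)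

theory Defs
  imports Main
begin

text \<open>A left brace carried by a type 'a: the abelian group (A,+) is the
  ab_group_add structure of 'a, and mul is the multiplication.\<close>

definition is_group_op :: "('a \<Rightarrow> 'a \<Rightarrow> 'a) \<Rightarrow> bool" where
  "is_group_op mul \<longleftrightarrow>
     (\<forall>x y z. mul (mul x y) z = mul x (mul y z)) \<and>
     (\<exists>e. (\<forall>x. mul e x = x \<and> mul x e = x) \<and> (\<forall>x. \<exists>y. mul x y = e \<and> mul y x = e))"

definition left_brace :: "('a::ab_group_add \<Rightarrow> 'a \<Rightarrow> 'a) \<Rightarrow> bool" where
  "left_brace mul \<longleftrightarrow> is_group_op mul \<and>
     (\<forall>a b c. mul a (b + c) = mul a b - a + mul a c)"

definition bstar :: "('a::ab_group_add \<Rightarrow> 'a \<Rightarrow> 'a) \<Rightarrow> 'a \<Rightarrow> 'a \<Rightarrow> 'a" where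
  "bstar mul a b = - a + mul a b - b"

definition add_span :: "'a::ab_group_add set \<Rightarrow> 'a set" where
  "add_span S = \<Inter>{H. 0 \<in> H \<and> (\<forall>x\<in>H. \<forall>y\<in>H. x - y \<in> H) \<and> S \<subseteq> H}"

definition star_set :: "('a::ab_group_add \<Rightarrow> 'a \<Rightarrow> 'a) \<Rightarrow> 'a set \<Rightarrow> 'a set \<Rightarrow> 'a set" where
  "star_set mul L M = add_span {bstar mul l m | l m. l \<in> L \<and> m \<in> M}"

text \<open>rser mul r = A^{(r+1)}, lser mul r = A^{r+1}.\<close>
fun rser :: "('a::ab_group_add \<Rightarrow> 'a \<Rightarrow> 'a) \<Rightarrow> nat \<Rightarrow> 'a set" where
  "rser mul 0 = UNIV"
| "rser mul (Suc r) = star_set mul (rser mul r) UNIV"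

fun lser :: "('a::ab_group_add \<Rightarrow> 'a \<Rightarrow> 'a) \<Rightarrow> nat \<Rightarrow> 'a set" where
  "lser mul 0 = UNIV"
| "lser mul (Suc r) = star_set mul UNIV (lser mul r)"

definition zsmul :: "int \<Rightarrow> 'a::ab_group_add \<Rightarrow> 'a" where
  "zsmul n a = (if 0 \<le> n then (\<Sum>i<nat n. a) else - (\<Sum>i<nat (- n). a))"

text \<open>Generalised binomial coefficient n(n-1)...(n-k+1)/k! (exact division).\<close>
definition gbinom :: "int \<Rightarrow> nat \<Rightarrow> int" where
  "gbinom n k = (\<Prod>i<k. n - int i) div int (fact k)"

definition aseq :: "('a::ab_group_add \<Rightarrow> 'a \<Rightarrow> 'a) \<Rightarrow> 'a \<Rightarrow> nat \<Rightarrow> 'a" where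
  "aseq mul a j = ((bstar mul a) ^^ (j - 1)) a"

end

theory Submission
  imports Defs Complex_Main
begin

lemma gbinom_pascal: "gbinom (n + 1) (Suc k) = gbinom n k + gbinom n (Suc k)"
  using gbinomial_int_Suc_Suc[of n k]
  by (simp only: gbinom_def gbinomial_prod_rev atLeast0LessThan of_nat_fact)

lemma gbinom_0_Suc: "gbinom 0 (Suc k) = 0"
proof -
  have h: "(\<Prod>i<Suc k. (0::int) - int i) = 0" by (rule prod_zero) auto
  show ?thesis unfolding gbinom_def h by simp
qed

lemma gbinom_0: "gbinom n 0 = 1"
  by (simp add: gbinom_def)

lemma zsmul_0 [simp]: "zsmul 0 x = 0"
  by (simp add: zsmul_def)

lemma zsmul_zero [simp]: "zsmul p (0::'a::ab_group_add) = 0"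
  by (simp add: zsmul_def)

lemma zsmul_1 [simp]: "zsmul 1 x = x"
  by (simp add: zsmul_def)

lemma zsmul_plus1: "zsmul (p + 1) x = zsmul p x + (x::'a::ab_group_add)"
proof (cases "0 \<le> p")
  case True
  then have "nat (p + 1) = Suc (nat p)" by simp
  then show ?thesis using True by (simp add: zsmul_def)
next
  case False
  then have e: "nat (- p) = Suc (nat (- (p + 1)))" by simp
  show ?thesis
  proof (cases "p = -1")
    case True then show ?thesis by (simp add: zsmul_def)
  next
    case False2: False
    then have "\<not> 0 \<le> p + 1" using False by simp
    then show ?thesis using False by (simp add: zsmul_def e)
  qed
qed

lemma zsmul_add: "zsmul (p + q) x = zsmul p x + zsmul q (x::'a::ab_group_add)"
proof (induction q rule: int_induct[where k=0])
  case base then show ?case by simp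
next
  case (step1 i)
  have "zsmul (p + (i + 1)) x = zsmul ((p + i) + 1) x" by (simp add: algebra_simps)
  also have "\<dots> = zsmul p x + zsmul (i+1) x" using step1 by (simp add: zsmul_plus1)
  finally show ?case .
next
  case (step2 i)
  have "zsmul (p + i) x = zsmul ((p + (i - 1)) + 1) x" by (simp add: algebra_simps)
  have "zsmul (p + i) x = zsmul (p + (i - 1)) x + x" using zsmul_plus1[of "p + (i - 1)" x] by simp
  then have "zsmul (p + (i - 1)) x = zsmul (p + i) x - x" by (simp add: algebra_simps)
  moreover have "zsmul i x = zsmul (i - 1) x + x" using zsmul_plus1[of "i - 1" x] by simp
  ultimately show ?case using step2 by (simp add: algebra_simps)
qed

lemma add_span_sub: "x \<in> add_span S \<Longrightarrow> y \<in> add_span S \<Longrightarrow> x - y \<in> add_span S"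
  unfolding add_span_def by blast

lemma add_span_0: "0 \<in> add_span S"
  unfolding add_span_def by blast

lemma add_span_gen: "x \<in> S \<Longrightarrow> x \<in> add_span S"
  unfolding add_span_def by blast

lemma add_span_add: "x \<in> add_span S \<Longrightarrow> y \<in> add_span S \<Longrightarrow> x + y \<in> add_span S"
proof -
  assume a: "x \<in> add_span S" "y \<in> add_span S"
  have "0 - y \<in> add_span S" by (rule add_span_sub[OF add_span_0 a(2)])
  from add_span_sub[OF a(1) this] show ?thesis by simp
qed

lemma bstar_add: "left_brace mul \<Longrightarrow> bstar mul x (y + z) = bstar mul x y + bstar mul x z"
  unfolding left_brace_def bstar_def by (simp add: algebra_simps)

lemma bstar_zero: "left_brace mul \<Longrightarrow> bstar mul x 0 = 0"
  using bstar_add[of mul x 0 0] by simp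

lemma bstar_minus: "left_brace mul \<Longrightarrow> bstar mul x (- y) = - bstar mul x y"
  using bstar_add[of mul x y "- y"] bstar_zero[of mul x] by (simp add: eq_neg_iff_add_eq_0 add.commute)

definition lam :: "('a::ab_group_add \<Rightarrow> 'a \<Rightarrow> 'a) \<Rightarrow> 'a \<Rightarrow> 'a \<Rightarrow> 'a" where
  "lam mul x y = - x + mul x y"

context
  fixes mul :: "'a::ab_group_add \<Rightarrow> 'a \<Rightarrow> 'a"
  assumes LB: "left_brace mul"
begin

lemma mul_x0: "mul x 0 = x"
  using LB unfolding left_brace_def by (metis add_0 add_diff_cancel_left' diff_add_cancel)

lemma mul_0x: "mul 0 y = y"
proof -
  obtain e where e: "\<forall>x. mul e x = x \<and> mul x e = x"
    using LB unfolding left_brace_def is_group_op_def by blast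
  have "e = 0" using e mul_x0[of e] by metis
  then show ?thesis using e by simp
qed

lemma mul_inv: "\<exists>y. mul x y = 0 \<and> mul y x = 0"
proof -
  obtain e where e: "\<forall>x. mul e x = x \<and> mul x e = x" "\<forall>x. \<exists>y. mul x y = e \<and> mul y x = e"
    using LB unfolding left_brace_def is_group_op_def by blast
  have "e = 0" using e mul_x0[of e] by metis
  then show ?thesis using e by simp
qed

lemma mul_assoc: "mul (mul x y) z = mul x (mul y z)"
  using LB unfolding left_brace_def is_group_op_def by blast

lemma lam_add: "lam mul x (y + z) = lam mul x y + lam mul x z"
  using LB unfolding left_brace_def lam_def by (simp add: algebra_simps)

lemma lam_minus: "lam mul x (- y) = - lam mul x y"
proof -
  have "lam mul x 0 = 0" using lam_add[of x 0 0] by simp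
  then show ?thesis using lam_add[of x y "- y"] by (simp add: eq_neg_iff_add_eq_0 add.commute)
qed

lemma lam_0: "lam mul 0 y = y"
  by (simp add: lam_def mul_0x)

lemma lam_mul: "lam mul (mul x y) z = lam mul x (lam mul y z)"
proof -
  have "lam mul x (lam mul y z) = lam mul x (- y) + lam mul x (mul y z)"
    unfolding lam_def[of mul y z] by (rule lam_add)
  also have "\<dots> = - mul x y + mul (mul x y) z"
    by (simp only: lam_minus) (simp add: lam_def mul_assoc algebra_simps)
  finally show ?thesis by (simp add: lam_def)
qed

lemma mul_lam: "mul x w = x + lam mul x w"
  by (simp add: lam_def)

lemma lam_bstar: "lam mul x y = bstar mul x y + y"
  by (simp add: lam_def bstar_def)

lemma bstar_in_R: "bstar mul u v \<in> rser mul (Suc 0)"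
  by (auto simp: star_set_def intro!: add_span_gen)

lemma R_kill:
  assumes "rser mul 2 = {0}" "l \<in> rser mul (Suc 0)"
  shows "lam mul l c = c"
proof -
  have "bstar mul l c \<in> star_set mul (rser mul (Suc 0)) UNIV"
    unfolding star_set_def by (rule add_span_gen) (use assms(2) in blast)
  then have "bstar mul l c \<in> rser mul 2" by (simp add: numeral_2_eq_2)
  then show ?thesis using assms(1) by (simp add: lam_bstar)
qed

lemma lemA:
  assumes "rser mul 2 = {0}" "l \<in> rser mul (Suc 0)"
  shows "lam mul (x + l) c = lam mul x c"
proof -
  obtain x' where x': "mul x x' = 0" "mul x' x = 0" using mul_inv by blast
  define w where "w = lam mul x' l"
  have wR: "w \<in> rser mul (Suc 0)"
    unfolding w_def lam_bstar using bstar_in_R[of x' l] assms(2)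
    by (simp only: rser.simps(2) add_span_add star_set_def)
  have "lam mul x w = l" unfolding w_def lam_mul[symmetric] x' lam_0 ..
  then have "mul x w = x + l" by (simp add: mul_lam)
  then have "lam mul (x + l) c = lam mul x (lam mul w c)" by (metis lam_mul)
  also have "\<dots> = lam mul x c" using R_kill[OF assms(1) wR] by simp
  finally show ?thesis .
qed

lemma lemB:
  assumes "rser mul 2 = {0}"
  shows "lam mul (x + a) c = lam mul x (lam mul a c)"
proof -
  obtain x' where x': "mul x x' = 0" "mul x' x = 0" using mul_inv by blast
  define w where "w = lam mul x' a"
  have "lam mul x w = a" unfolding w_def lam_mul[symmetric] x' lam_0 ..
  then have "mul x w = x + a" by (simp add: mul_lam)
  then have "lam mul (x + a) c = lam mul x (lam mul w c)" by (metis lam_mul)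
  also have "w = a + bstar mul x' a" unfolding w_def lam_bstar by simp
  also have "lam mul (a + bstar mul x' a) c = lam mul a c"
    by (rule lemA[OF assms bstar_in_R])
  finally show ?thesis .
qed

lemma bstar_step:
  assumes "rser mul 2 = {0}"
  shows "bstar mul (x + a) y = bstar mul x (bstar mul a y) + bstar mul a y + bstar mul x y"
proof -
  have "bstar mul (x + a) y = lam mul (x + a) y - y" by (simp add: lam_bstar)
  also have "\<dots> = lam mul x (bstar mul a y + y) - y" using lemB[OF assms] by (simp add: lam_bstar)
  also have "\<dots> = bstar mul x (bstar mul a y) + bstar mul a y + bstar mul x y"
    by (simp add: lam_add lam_bstar bstar_add[OF LB])
  finally show ?thesis .
qed

end

lemma aseq_1: "aseq mul a (Suc 0) = a"
  by (simp add: aseq_def)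

lemma aseq_Suc: "1 \<le> j \<Longrightarrow> aseq mul a (Suc j) = bstar mul a (aseq mul a j)"
  by (cases j) (simp_all add: aseq_def)

lemma aseq_lser: "1 \<le> j \<Longrightarrow> aseq mul a j \<in> lser mul (j - 1)"
proof (induction j rule: dec_induct)
  case base then show ?case by simp
next
  case (step i)
  have "bstar mul a (aseq mul a i) \<in> star_set mul UNIV (lser mul (i - 1))"
    unfolding star_set_def by (rule add_span_gen) (use step in blast)
  then show ?case using step by (cases i) (simp_all add: aseq_Suc)
qed

lemma aseq_zero:
  assumes LB: "left_brace mul" and "lser mul m = {0}" and "m < j"
  shows "aseq mul a j = 0"
proof -
  have "Suc m \<le> j" using assms(3) by simp
  then show ?thesis
  proof (induction j rule: dec_induct)
    case base
    show ?case using aseq_lser[of "Suc m" mul a] assms(2) by simp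
  next
    case (step i)
    then show ?case by (simp add: aseq_Suc bstar_zero[OF LB])
  qed
qed

theorem mainTheorem11:
  fixes mul :: "'a::ab_group_add \<Rightarrow> 'a \<Rightarrow> 'a" and m :: nat and a :: 'a and n :: int and j :: nat
  assumes "m \<ge> 2"
    and "left_brace mul"
    and "rser mul 2 = {0}"
    and "lser mul m = {0}"
    and "1 \<le> j" and "j \<le> m"
  shows "bstar mul (zsmul n a) (aseq mul a j)
           = (\<Sum>k = 1..m - j. zsmul (gbinom n k) (aseq mul a (k + j)))"
proof -
  note LB = assms(2)
  define A where "A = aseq mul a"
  have A0: "A i = 0" if "m < i" for i
    unfolding A_def using aseq_zero[OF LB assms(4) that] .
  have AS: "A (Suc i) = bstar mul a (A i)" if "1 \<le> i" for i
    unfolding A_def using aseq_Suc[OF that] .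
  define F where "F n' j' = (\<Sum>k<m. zsmul (gbinom n' (Suc k)) (A (Suc k + j')))" for n' j'
  have pascal: "F (n' + 1) j' = F n' (Suc j') + F n' j' + A (Suc j')" if "1 \<le> j'" for n' j'
  proof -
    define g where "g k = zsmul (gbinom n' k) (A (Suc k + j'))" for k
    have "A (Suc j') + F n' (Suc j') = (\<Sum>k<Suc m. g k)"
      unfolding sum.lessThan_Suc_shift F_def g_def by (simp add: gbinom_0)
    also have "\<dots> = (\<Sum>k<m. g k)"
      using A0[of "Suc m + j'"] that by (simp add: g_def)
    also have "\<dots> = (\<Sum>k<m. zsmul (gbinom n' k) (A (Suc k + j')))" by (simp add: g_def)
    finally have "A (Suc j') + F n' (Suc j') + F n' j'
       = (\<Sum>k<m. zsmul (gbinom n' k) (A (Suc k + j')) + zsmul (gbinom n' (Suc k)) (A (Suc k + j')))"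
      unfolding F_def sum.distrib by simp
    also have "\<dots> = F (n' + 1) j'"
      unfolding F_def by (rule sum.cong) (simp_all add: gbinom_pascal zsmul_add)
    finally show ?thesis by (simp add: algebra_simps)
  qed
  have Fz: "F n' j' = 0" if "m < j'" for n' j'
    unfolding F_def using A0 that by simp
  have stp: "bstar mul (zsmul (n' + 1) a) y = bstar mul (zsmul n' a) (bstar mul a y) + bstar mul a y + bstar mul (zsmul n' a) y" for n' y
    using bstar_step[OF LB assms(3), of "zsmul n' a" a y] by (simp add: zsmul_plus1)
  have main: "\<forall>j'\<ge>1. bstar mul (zsmul n a) (A j') = F n j'"
  proof (induction n rule: int_induct[where k=0])
    case base
    have "bstar mul 0 y = 0" for y by (simp add: bstar_def mul_0x[OF LB])
    then show ?case by (simp add: F_def gbinom_0_Suc)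
  next
    case (step1 i)
    show ?case
    proof (intro allI impI)
      fix j' :: nat assume j': "1 \<le> j'"
      show "bstar mul (zsmul (i + 1) a) (A j') = F (i + 1) j'"
        using stp[of i "A j'"] step1(2)[rule_format, of "Suc j'"] step1(2)[rule_format, OF j'] pascal[OF j', of i] AS[OF j', symmetric] by simp
    qed
  next
    case (step2 i)
    have P: "bstar mul (zsmul (i - 1) a) (A j') = F (i - 1) j'" if "1 \<le> j'" "j' \<le> Suc m" for j'
      using that(2,1)
    proof (induction j' rule: inc_induct)
      case base
      then show ?case using A0[of "Suc m"] Fz[of "Suc m"] by (simp add: bstar_zero[OF LB])
    next
      case (step j'')
      have e: "bstar mul (zsmul i a) (A j'') = bstar mul (zsmul (i - 1) a) (A (Suc j''))
           + A (Suc j'') + bstar mul (zsmul (i - 1) a) (A j'')"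
        using stp[of "i - 1" "A j''"] AS[OF step.prems] by simp
      have "F i j'' = F (i - 1) (Suc j'') + F (i - 1) j'' + A (Suc j'')"
        using pascal[OF step.prems, of "i - 1"] by simp
      then show ?case using e step2(2) step.prems step.IH by (simp add: algebra_simps)
    qed
    show ?case
    proof (intro allI impI)
      fix j' :: nat assume j': "1 \<le> j'"
      show "bstar mul (zsmul (i - 1) a) (A j') = F (i - 1) j'"
      proof (cases "j' \<le> Suc m")
        case True then show ?thesis using P j' by blast
      next
        case False then show ?thesis using A0[of j'] Fz[of j'] by (simp add: bstar_zero[OF LB])
      qed
    qed
  qed
  have "F n j = (\<Sum>k = 1..m. zsmul (gbinom n k) (A (k + j)))"
    unfolding F_def by (simp add: sum.atLeast1_atMost_eq)
  also have "\<dots> = (\<Sum>k = 1..m - j. zsmul (gbinom n k) (A (k + j)))"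
    by (rule sum.mono_neutral_right) (auto simp: A0)
  finally show ?thesis using main assms(5) unfolding A_def by simp
qed

end
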